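(* Let $G_1,\ldots,G_k$ be groups, $G=G_1\times\cdots\times G_k$, and for $i=1,\ldots,k$ let $H_i\le G_i$. Let $H\le G$ be a subgroup such that $H_1\times\cdots\times H_k\trianglelefteq H$, the quotient $N_G(H_1\times\cdots\times H_k)/(H_1\times\cdots\times H_k)$ is abelian, and $N_{G_i}(\sigma_i(H))=N_{G_i}(H_i)$ for all $i$. Then $$N_G(H)=N_G(H_1\times\cdots\times H_k)=N_{G_1}(H_1)\times\cdots\times N_{G_k}(H_k).$$
   Context: $\sigma_i:G\to G_i$ denotes the natural projection onto the $i$-th direct factor. *)

theory Defs
  imports "HOL-Algebra.Algebra"
begin

definition proj_set :: "'i \<Rightarrow> ('i \<Rightarrow> 'a) set \<Rightarrow> 'a set" where
  "proj_set i H = (\<lambda>x. x i) ` H"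

end

theory Submission
  imports Defs
begin

lemma (in group) normalizer_iff:
  assumes "S \<subseteq> carrier G"
  shows "g \<in> normalizer G S \<longleftrightarrow> g \<in> carrier G \<and> (\<forall>s\<in>S. g \<otimes> s \<otimes> inv g \<in> S \<and> inv g \<otimes> s \<otimes> g \<in> S)"
proof -
  have eq: "g <# S #> inv g = (\<lambda>s. g \<otimes> s \<otimes> inv g) ` S"
    unfolding l_coset_def r_coset_def by auto
  show ?thesis
  proof
    assume g: "g \<in> normalizer G S"
    hence gc: "g \<in> carrier G" and E: "g <# S #> inv g = S"
      using assms unfolding normalizer_def stabilizer_def by auto
    have "\<forall>s\<in>S. g \<otimes> s \<otimes> inv g \<in> S" using E eq by auto
    moreover have "inv g \<otimes> s \<otimes> g \<in> S" if s: "s \<in> S" for s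
    proof -
      from s E eq obtain t where t: "t \<in> S" "s = g \<otimes> t \<otimes> inv g" by auto
      have tc: "t \<in> carrier G" using t assms by auto
      have "inv g \<otimes> s \<otimes> g = t" using t(2) gc tc by (simp add: m_assoc flip: m_assoc[of "inv g" g t])
      thus ?thesis using t by simp
    qed
    ultimately show "g \<in> carrier G \<and> (\<forall>s\<in>S. g \<otimes> s \<otimes> inv g \<in> S \<and> inv g \<otimes> s \<otimes> g \<in> S)"
      using gc by auto
  next
    assume R: "g \<in> carrier G \<and> (\<forall>s\<in>S. g \<otimes> s \<otimes> inv g \<in> S \<and> inv g \<otimes> s \<otimes> g \<in> S)"
    hence gc: "g \<in> carrier G" by auto
    have "(\<lambda>s. g \<otimes> s \<otimes> inv g) ` S = S"
    proof
      show "(\<lambda>s. g \<otimes> s \<otimes> inv g) ` S \<subseteq> S" using R by auto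
      show "S \<subseteq> (\<lambda>s. g \<otimes> s \<otimes> inv g) ` S"
      proof
        fix s assume s: "s \<in> S"
        hence sc: "s \<in> carrier G" using assms by auto
        have "s = g \<otimes> (inv g \<otimes> s \<otimes> g) \<otimes> inv g" using gc sc by (simp add: m_assoc flip: m_assoc[of g "inv g" s])
        thus "s \<in> (\<lambda>s. g \<otimes> s \<otimes> inv g) ` S" using R s by blast
      qed
    qed
    thus "g \<in> normalizer G S" using gc assms eq unfolding normalizer_def stabilizer_def by auto
  qed
qed


theorem lemma5p1:
  fixes Gs :: "nat \<Rightarrow> ('a, 'b) monoid_scheme"
    and Hs :: "nat \<Rightarrow> 'a set"
    and H :: "(nat \<Rightarrow> 'a) set"
    and k :: nat
  assumes groups: "\<And>i. i \<in> {1..k} \<Longrightarrow> group (Gs i)"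
    and subHi: "\<And>i. i \<in> {1..k} \<Longrightarrow> subgroup (Hs i) (Gs i)"
    and subH: "subgroup H (product_group {1..k} Gs)"
    and normal: "(\<Pi>\<^sub>E i\<in>{1..k}. Hs i) \<lhd> ((product_group {1..k} Gs)\<lparr>carrier := H\<rparr>)"
    and abelian: "comm_group (((product_group {1..k} Gs)\<lparr>carrier :=
                     normalizer (product_group {1..k} Gs) (\<Pi>\<^sub>E i\<in>{1..k}. Hs i)\<rparr>)
                   Mod (\<Pi>\<^sub>E i\<in>{1..k}. Hs i))"
    and normproj: "\<And>i. i \<in> {1..k} \<Longrightarrow>
                     normalizer (Gs i) (proj_set i H) = normalizer (Gs i) (Hs i)"
  shows "normalizer (product_group {1..k} Gs) H
           = normalizer (product_group {1..k} Gs) (\<Pi>\<^sub>E i\<in>{1..k}. Hs i)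
       \<and> normalizer (product_group {1..k} Gs) (\<Pi>\<^sub>E i\<in>{1..k}. Hs i)
           = (\<Pi>\<^sub>E i\<in>{1..k}. normalizer (Gs i) (Hs i))"
proof -
  let ?I = "{1..k::nat}"
  let ?P = "product_group ?I Gs"
  let ?K = "\<Pi>\<^sub>E i\<in>?I. Hs i"
  interpret P: group ?P using product_group[of ?I Gs] groups by blast
  have subK: "subgroup ?K ?P" using PiE_subgroup_product_group groups subHi by blast
  have Kc: "?K \<subseteq> carrier ?P" using subK subgroup.subset by blast
  have Hc: "H \<subseteq> carrier ?P" using subH subgroup.subset by blast
  have Hic: "Hs i \<subseteq> carrier (Gs i)" if "i \<in> ?I" for i using subHi[OF that] subgroup.subset by blast
  have invP: "inv\<^bsub>?P\<^esub> g = (\<lambda>i\<in>?I. inv\<^bsub>Gs i\<^esub> (g i))" if "g \<in> carrier ?P" for g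
    using inv_product_group[of g ?I Gs] that groups by simp
  have conj: "(g \<otimes>\<^bsub>?P\<^esub> s \<otimes>\<^bsub>?P\<^esub> inv\<^bsub>?P\<^esub> g) i = g i \<otimes>\<^bsub>Gs i\<^esub> s i \<otimes>\<^bsub>Gs i\<^esub> inv\<^bsub>Gs i\<^esub> (g i)"
    if "g \<in> carrier ?P" "s \<in> carrier ?P" "i \<in> ?I" for g s i
    using that groups invP P.inv_closed by simp
  have conj2: "(inv\<^bsub>?P\<^esub> g \<otimes>\<^bsub>?P\<^esub> s \<otimes>\<^bsub>?P\<^esub> g) i = inv\<^bsub>Gs i\<^esub> (g i) \<otimes>\<^bsub>Gs i\<^esub> s i \<otimes>\<^bsub>Gs i\<^esub> g i"
    if "g \<in> carrier ?P" "s \<in> carrier ?P" "i \<in> ?I" for g s i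
    using that groups invP P.inv_closed by simp
  have S1: "normalizer ?P ?K = (\<Pi>\<^sub>E i\<in>?I. normalizer (Gs i) (Hs i))"
  proof
    show "normalizer ?P ?K \<subseteq> (\<Pi>\<^sub>E i\<in>?I. normalizer (Gs i) (Hs i))"
    proof
      fix g assume g: "g \<in> normalizer ?P ?K"
      hence gc: "g \<in> carrier ?P" and gK: "\<forall>s\<in>?K. g \<otimes>\<^bsub>?P\<^esub> s \<otimes>\<^bsub>?P\<^esub> inv\<^bsub>?P\<^esub> g \<in> ?K \<and> inv\<^bsub>?P\<^esub> g \<otimes>\<^bsub>?P\<^esub> s \<otimes>\<^bsub>?P\<^esub> g \<in> ?K"
        using P.normalizer_iff[OF Kc] by auto
      have "g i \<in> normalizer (Gs i) (Hs i)" if i: "i \<in> ?I" for i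
      proof -
        interpret Gi: group "Gs i" using groups i by simp
        have gic: "g i \<in> carrier (Gs i)" using gc i by auto
        show ?thesis unfolding Gi.normalizer_iff[OF Hic[OF i]]
        proof (intro conjI ballI gic)
          fix h assume h: "h \<in> Hs i"
          define s where "s = (\<lambda>j\<in>?I. if j = i then h else \<one>\<^bsub>Gs j\<^esub>)"
          have sK: "s \<in> ?K" unfolding s_def using h subHi subgroup.one_closed by fastforce
          have si: "s i = h" using i unfolding s_def by simp
          have sc: "s \<in> carrier ?P" using sK Kc by blast
          have "(g \<otimes>\<^bsub>?P\<^esub> s \<otimes>\<^bsub>?P\<^esub> inv\<^bsub>?P\<^esub> g) i \<in> Hs i" using gK sK i by blast
          thus "g i \<otimes>\<^bsub>Gs i\<^esub> h \<otimes>\<^bsub>Gs i\<^esub> inv\<^bsub>Gs i\<^esub> g i \<in> Hs i" using conj[OF gc sc i] si by simp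
          have "(inv\<^bsub>?P\<^esub> g \<otimes>\<^bsub>?P\<^esub> s \<otimes>\<^bsub>?P\<^esub> g) i \<in> Hs i" using gK sK i by blast
          thus "inv\<^bsub>Gs i\<^esub> g i \<otimes>\<^bsub>Gs i\<^esub> h \<otimes>\<^bsub>Gs i\<^esub> g i \<in> Hs i" using conj2[OF gc sc i] si by simp
        qed
      qed
      moreover have "g \<in> extensional ?I" using gc by (simp add: PiE_def)
      ultimately show "g \<in> (\<Pi>\<^sub>E i\<in>?I. normalizer (Gs i) (Hs i))" by (simp add: PiE_def)
    qed
  next
    show "(\<Pi>\<^sub>E i\<in>?I. normalizer (Gs i) (Hs i)) \<subseteq> normalizer ?P ?K"
    proof
      fix g assume g: "g \<in> (\<Pi>\<^sub>E i\<in>?I. normalizer (Gs i) (Hs i))"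
      have gi: "g i \<in> carrier (Gs i) \<and> (\<forall>s\<in>Hs i. g i \<otimes>\<^bsub>Gs i\<^esub> s \<otimes>\<^bsub>Gs i\<^esub> inv\<^bsub>Gs i\<^esub> (g i) \<in> Hs i \<and> inv\<^bsub>Gs i\<^esub> (g i) \<otimes>\<^bsub>Gs i\<^esub> s \<otimes>\<^bsub>Gs i\<^esub> g i \<in> Hs i)"
        if i: "i \<in> ?I" for i
      proof -
        have "g i \<in> normalizer (Gs i) (Hs i)" using g i by (auto simp: PiE_def Pi_def)
        thus ?thesis using group.normalizer_iff[OF groups[OF i] Hic[OF i]] by blast
      qed
      have gc: "g \<in> carrier ?P" using g gi by (auto simp: PiE_def Pi_def)
      show "g \<in> normalizer ?P ?K" unfolding P.normalizer_iff[OF Kc]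
      proof (intro conjI ballI gc)
        fix s assume sK: "s \<in> ?K"
        have sc: "s \<in> carrier ?P" using sK Kc by blast
        have "g \<otimes>\<^bsub>?P\<^esub> s \<otimes>\<^bsub>?P\<^esub> inv\<^bsub>?P\<^esub> g \<in> extensional ?I"
          using P.m_closed P.inv_closed gc sc by (simp add: PiE_def)
        moreover have "(g \<otimes>\<^bsub>?P\<^esub> s \<otimes>\<^bsub>?P\<^esub> inv\<^bsub>?P\<^esub> g) i \<in> Hs i" if i: "i \<in> ?I" for i
          using conj[OF gc sc i] gi[OF i] sK i by auto
        ultimately show "g \<otimes>\<^bsub>?P\<^esub> s \<otimes>\<^bsub>?P\<^esub> inv\<^bsub>?P\<^esub> g \<in> ?K" by (simp add: PiE_def)
        have "inv\<^bsub>?P\<^esub> g \<otimes>\<^bsub>?P\<^esub> s \<otimes>\<^bsub>?P\<^esub> g \<in> extensional ?I"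
          using P.m_closed P.inv_closed gc sc by (simp add: PiE_def)
        moreover have "(inv\<^bsub>?P\<^esub> g \<otimes>\<^bsub>?P\<^esub> s \<otimes>\<^bsub>?P\<^esub> g) i \<in> Hs i" if i: "i \<in> ?I" for i
          using conj2[OF gc sc i] gi[OF i] sK i by auto
        ultimately show "inv\<^bsub>?P\<^esub> g \<otimes>\<^bsub>?P\<^esub> s \<otimes>\<^bsub>?P\<^esub> g \<in> ?K" by (simp add: PiE_def)
      qed
    qed
  qed
  have S2: "normalizer ?P H \<subseteq> normalizer ?P ?K"
  proof
    fix g assume g: "g \<in> normalizer ?P H"
    hence gc: "g \<in> carrier ?P" and gH: "\<forall>s\<in>H. g \<otimes>\<^bsub>?P\<^esub> s \<otimes>\<^bsub>?P\<^esub> inv\<^bsub>?P\<^esub> g \<in> H \<and> inv\<^bsub>?P\<^esub> g \<otimes>\<^bsub>?P\<^esub> s \<otimes>\<^bsub>?P\<^esub> g \<in> H"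
      using P.normalizer_iff[OF Hc] by auto
    have "g i \<in> normalizer (Gs i) (Hs i)" if i: "i \<in> ?I" for i
    proof -
      interpret Gi: group "Gs i" using groups i by simp
      have gic: "g i \<in> carrier (Gs i)" using gc i by auto
      have pc: "proj_set i H \<subseteq> carrier (Gs i)" using Hc i unfolding proj_set_def by (auto simp: PiE_def Pi_def subset_iff)
      have "g i \<in> normalizer (Gs i) (proj_set i H)" unfolding Gi.normalizer_iff[OF pc]
      proof (intro conjI ballI gic)
        fix t assume "t \<in> proj_set i H"
        then obtain s where sH: "s \<in> H" and st: "t = s i" unfolding proj_set_def by auto
        have sc: "s \<in> carrier ?P" using sH Hc by blast
        have "(g \<otimes>\<^bsub>?P\<^esub> s \<otimes>\<^bsub>?P\<^esub> inv\<^bsub>?P\<^esub> g) i \<in> proj_set i H" using gH sH unfolding proj_set_def by blast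
        thus "g i \<otimes>\<^bsub>Gs i\<^esub> t \<otimes>\<^bsub>Gs i\<^esub> inv\<^bsub>Gs i\<^esub> g i \<in> proj_set i H" using conj[OF gc sc i] st by simp
        have "(inv\<^bsub>?P\<^esub> g \<otimes>\<^bsub>?P\<^esub> s \<otimes>\<^bsub>?P\<^esub> g) i \<in> proj_set i H" using gH sH unfolding proj_set_def by blast
        thus "inv\<^bsub>Gs i\<^esub> g i \<otimes>\<^bsub>Gs i\<^esub> t \<otimes>\<^bsub>Gs i\<^esub> g i \<in> proj_set i H" using conj2[OF gc sc i] st by simp
      qed
      thus ?thesis using normproj[OF i] by simp
    qed
    moreover have "g \<in> extensional ?I" using gc by (simp add: PiE_def)
    ultimately show "g \<in> normalizer ?P ?K" unfolding S1 by (simp add: PiE_def)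
  qed
  note mult_product_group[simp del]
  let ?N = "?P\<lparr>carrier := normalizer ?P ?K\<rparr>"
  have NKsub: "subgroup (normalizer ?P ?K) ?P" using P.normalizer_imp_subgroup[OF Kc] .
  have nKN: "?K \<lhd> ?N" using P.subgroup_in_normalizer[OF subK] .
  interpret NK: normal ?K ?N using nKN .
  interpret HG: normal ?K "?P\<lparr>carrier := H\<rparr>" using normal .
  interpret Q: comm_group "?N Mod ?K" using abelian .
  have invH: "inv\<^bsub>?P\<lparr>carrier := H\<rparr>\<^esub> x = inv\<^bsub>?P\<^esub> x" if "x \<in> H" for x
    using P.m_inv_consistent[OF subH that] .
  have KH: "?K \<subseteq> H" using HG.subset by simp
  have HN: "H \<subseteq> normalizer ?P ?K"
  proof
    fix h assume h: "h \<in> H"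
    have hc: "h \<in> carrier ?P" using h Hc by blast
    show "h \<in> normalizer ?P ?K" unfolding P.normalizer_iff[OF Kc]
    proof (intro conjI ballI hc)
      fix s assume s: "s \<in> ?K"
      show "h \<otimes>\<^bsub>?P\<^esub> s \<otimes>\<^bsub>?P\<^esub> inv\<^bsub>?P\<^esub> h \<in> ?K"
        using HG.inv_op_closed2[of h s] h s invH[OF h] by (simp del: mult_product_group)
      show "inv\<^bsub>?P\<^esub> h \<otimes>\<^bsub>?P\<^esub> s \<otimes>\<^bsub>?P\<^esub> h \<in> ?K"
        using HG.inv_op_closed1[of h s] h s invH[OF h] by (simp del: mult_product_group)
    qed
  qed
  have rc: "r_coset ?N ?K x = r_coset ?P ?K x" for x unfolding r_coset_def by simp
  have C: "g \<otimes>\<^bsub>?P\<^esub> h \<otimes>\<^bsub>?P\<^esub> inv\<^bsub>?P\<^esub> g \<in> H" if g: "g \<in> normalizer ?P ?K" and h: "h \<in> H" for g h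
  proof -
    have hN: "h \<in> normalizer ?P ?K" using h HN by blast
    have gc: "g \<in> carrier ?P" and hc: "h \<in> carrier ?P" using g hN NKsub subgroup.subset by blast+
    have A: "r_coset ?N ?K g \<in> carrier (?N Mod ?K)" using g unfolding FactGroup_def RCOSETS_def by auto
    have B: "r_coset ?N ?K h \<in> carrier (?N Mod ?K)" using hN unfolding FactGroup_def RCOSETS_def by auto
    have "r_coset ?N ?K g \<otimes>\<^bsub>?N Mod ?K\<^esub> r_coset ?N ?K h = r_coset ?N ?K h \<otimes>\<^bsub>?N Mod ?K\<^esub> r_coset ?N ?K g"
      using Q.m_comm[OF A B] .
    hence "set_mult ?N (r_coset ?N ?K g) (r_coset ?N ?K h) = set_mult ?N (r_coset ?N ?K h) (r_coset ?N ?K g)"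
      unfolding FactGroup_def by simp
    hence "r_coset ?N ?K (g \<otimes>\<^bsub>?N\<^esub> h) = r_coset ?N ?K (h \<otimes>\<^bsub>?N\<^esub> g)"
      using NK.rcos_sum g hN by simp
    hence E: "r_coset ?P ?K (g \<otimes>\<^bsub>?P\<^esub> h) = r_coset ?P ?K (h \<otimes>\<^bsub>?P\<^esub> g)" unfolding rc by simp
    have "g \<otimes>\<^bsub>?P\<^esub> h \<in> r_coset ?P ?K (g \<otimes>\<^bsub>?P\<^esub> h)" using P.rcos_self[OF P.m_closed[OF gc hc] subK] .
    hence "g \<otimes>\<^bsub>?P\<^esub> h \<in> r_coset ?P ?K (h \<otimes>\<^bsub>?P\<^esub> g)" using E by (simp only:)
    then obtain x where x: "x \<in> ?K" and gh: "g \<otimes>\<^bsub>?P\<^esub> h = x \<otimes>\<^bsub>?P\<^esub> (h \<otimes>\<^bsub>?P\<^esub> g)"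
      unfolding r_coset_def by blast
    have xc: "x \<in> carrier ?P" using x Kc by blast
    have "g \<otimes>\<^bsub>?P\<^esub> h \<otimes>\<^bsub>?P\<^esub> inv\<^bsub>?P\<^esub> g = x \<otimes>\<^bsub>?P\<^esub> (h \<otimes>\<^bsub>?P\<^esub> g) \<otimes>\<^bsub>?P\<^esub> inv\<^bsub>?P\<^esub> g"
      by (simp only: gh)
    also have "\<dots> = x \<otimes>\<^bsub>?P\<^esub> h"
      using P.m_assoc[OF xc P.m_closed[OF hc gc] P.inv_closed[OF gc]]
        P.m_assoc[OF hc gc P.inv_closed[OF gc]] P.r_inv[OF gc] P.r_one[OF hc] by (simp only:)
    finally have "g \<otimes>\<^bsub>?P\<^esub> h \<otimes>\<^bsub>?P\<^esub> inv\<^bsub>?P\<^esub> g = x \<otimes>\<^bsub>?P\<^esub> h" .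
    moreover have "x \<otimes>\<^bsub>?P\<^esub> h \<in> H"
      by (rule subgroup.m_closed[OF subH]) (use x KH h in auto)
    ultimately show ?thesis by (simp only:)
  qed
  have S3: "normalizer ?P ?K \<subseteq> normalizer ?P H"
  proof
    fix g assume g: "g \<in> normalizer ?P ?K"
    have gc: "g \<in> carrier ?P" using subgroup.mem_carrier[OF NKsub g] .
    have gi: "inv\<^bsub>?P\<^esub> g \<in> normalizer ?P ?K" using subgroup.m_inv_closed[OF NKsub g] .
    show "g \<in> normalizer ?P H" unfolding P.normalizer_iff[OF Hc]
    proof (intro conjI ballI gc)
      fix h assume h: "h \<in> H"
      show "g \<otimes>\<^bsub>?P\<^esub> h \<otimes>\<^bsub>?P\<^esub> inv\<^bsub>?P\<^esub> g \<in> H" using C[OF g h] .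
      have "inv\<^bsub>?P\<^esub> g \<otimes>\<^bsub>?P\<^esub> h \<otimes>\<^bsub>?P\<^esub> inv\<^bsub>?P\<^esub> (inv\<^bsub>?P\<^esub> g) \<in> H" using C[OF gi h] .
      thus "inv\<^bsub>?P\<^esub> g \<otimes>\<^bsub>?P\<^esub> h \<otimes>\<^bsub>?P\<^esub> g \<in> H" unfolding P.inv_inv[OF gc] .
    qed
  qed
  show ?thesis using S1 S2 S3 by blast
qed

end
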